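(* Let $d,s,t,\ell$ be nonnegative integers with $s\ge 1$, $d \geq 2t-3$ and $t \geq \max\{4, \ell+3\}$, and let $\theta_{t,\ell}\in\Theta_{t,\ell}$. For any two edges of $W_d(s)$, the number of subgraphs of $W_d(s)$ isomorphic to $\theta_{t,\ell}$ that contain both of these edges and contain exactly one hub vertex of $W_d(s)$ is at most \[ N= \begin{cases} \max\{s(t-3),\, t-2\}, & \text{if } \theta_{t,\ell} = F_t,\\ s(t-3), & \text{if } \theta_{t,\ell} \neq F_t \text{ and } \mathbf{X}(\theta_{t,\ell}) \text{ is symmetric},\\ 2s(t-3), & \text{if } \mathbf{X}(\theta_{t,\ell}) \text{ is asymmetric}. \end{cases} \]
   Context: For $d \ge 3$ and $s \ge 1$, the $s$-hubbed wheel $W_d(s) = \overline{K_s} + C_d$ has vertex set $\{u_1,\dots,u_s\} \cup \{v_1,\dots,v_d\}$, where $v_1v_2\cdots v_dv_1$ is a cycle, the hub vertices $u_1,\dots,u_s$ are pairwise non-adjacent, and every $u_a$ is adjacent to every $v_i$. Edges $u_av_i$ are spokes; edges $v_iv_{i+1}$ (indices mod $d$) are rim edges. For $t\ge 3$ and $0 \le \ell \le t-3$, $\Theta_{t,\ell}$ is the class of graphs $\theta_{t,\ell}$ obtained from a cycle $v_1v_2\cdots v_tv_1$ by adding exactly $\ell$ chords $v_1v_{i_1},\dots,v_1v_{i_\ell}$ with $2<i_1<\cdots<i_\ell<t$. Its vector is $\mathbf{X}(\theta_{t,\ell}) = (2, i_1, \dots, i_\ell, t)$. The graph (or its vector) is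 symmetric if $\ell = 0$ or $i_j + i_{\ell+1-j} = t+2$ for every $j \le (\ell+1)/2$, and asymmetric otherwise. The fan $F_t$ is $\theta_{t,t-3}$, i.e., the $t$-cycle with all chords $v_1v_i$, $3\le i\le t-1$. *)

theory Defs
  imports Main
begin

text \<open>Graphs are given by edge sets; an edge is a 2-element vertex set.\<close>

text \<open>The s-hubbed wheel W_d(s): hub vertices Inl a (a < s), rim vertices Inr i (i < d),
  rim cycle Inr 0, Inr 1, ..., Inr (d-1), Inr 0.\<close>
definition hubs :: "nat \<Rightarrow> (nat + nat) set" where
  "hubs s = Inl ` {..<s}"

definition spokes :: "nat \<Rightarrow> nat \<Rightarrow> (nat + nat) set set" where
  "spokes d s = {{Inl a, Inr i} | a i. a < s \<and> i < d}"

definition rim_edges :: "nat \<Rightarrow> (nat + nat) set set" where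
  "rim_edges d = {{Inr i, Inr ((i + 1) mod d)} | i. i < d}"

definition wheel_edges :: "nat \<Rightarrow> nat \<Rightarrow> (nat + nat) set set" where
  "wheel_edges d s = spokes d s \<union> rim_edges d"

text \<open>theta_{t,l}: cycle v_1 ... v_t v_1 (vertices 1..t) plus the chords {1,i}, i \<in> I,
  where I = {i_1,...,i_l} with 2 < i_1 < ... < i_l < t.\<close>
definition theta_chord_set :: "nat \<Rightarrow> nat \<Rightarrow> nat set \<Rightarrow> bool" where
  "theta_chord_set t l I \<longleftrightarrow> I \<subseteq> {3..<t} \<and> card I = l"

definition theta_edges :: "nat \<Rightarrow> nat set \<Rightarrow> nat set set" where
  "theta_edges t I = {{i, i + 1} | i. 1 \<le> i \<and> i < t} \<union> {{t, 1}} \<union> {{1, i} | i. i \<in> I}"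

definition theta_vector :: "nat \<Rightarrow> nat set \<Rightarrow> nat list" where
  "theta_vector t I = [2] @ sorted_list_of_set I @ [t]"

text \<open>Symmetric: l = 0 or i_j + i_{l+1-j} = t + 2 for all 1 \<le> j \<le> (l+1)/2
  (chords indexed from 1, i.e. i_j = (sorted_list_of_set I) ! (j - 1)).\<close>
definition theta_symmetric :: "nat \<Rightarrow> nat set \<Rightarrow> bool" where
  "theta_symmetric t I \<longleftrightarrow>
     (let xs = sorted_list_of_set I; l = length xs in
       l = 0 \<or> (\<forall>j. 1 \<le> j \<and> 2 * j \<le> l + 1 \<longrightarrow> xs ! (j - 1) + xs ! (l - j) = t + 2))"

definition fan_chords :: "nat \<Rightarrow> nat set" where
  "fan_chords t = {3..<t}"

text \<open>An edge set H (a subgraph with vertex set \<Union>H; theta has no isolated vertices)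
  is isomorphic to theta_{t,l} with chord set I.\<close>
definition iso_theta :: "nat \<Rightarrow> nat set \<Rightarrow> 'v set set \<Rightarrow> bool" where
  "iso_theta t I H \<longleftrightarrow>
     (\<exists>f. bij_betw f {1..t} (\<Union>H) \<and> H = (\<lambda>e. f ` e) ` theta_edges t I)"

end

theory Submission
  imports Defs
begin

definition Ed :: "nat \<Rightarrow> nat \<Rightarrow> (nat + nat) set" where
  "Ed d k = {Inr (k mod d), Inr (Suc k mod d)}"

definition Gw :: "nat \<Rightarrow> nat \<Rightarrow> nat \<Rightarrow> nat \<Rightarrow> nat set \<Rightarrow> (nat + nat) set set" where
  "Gw d t a j Z = {Ed d (j+r) | r. r < t-2} \<union> {{Inl a, Inr ((j+z) mod d)} | z. z \<in> Z}"

lemma Ed_eq: assumes "d \<ge> 3" shows "Ed d x = Ed d y \<longleftrightarrow> x mod d = y mod d"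
proof
  assume h: "Ed d x = Ed d y"
  show "x mod d = y mod d"
  proof (rule ccontr)
    assume ne: "x mod d \<noteq> y mod d"
    hence "x mod d = Suc y mod d" "Suc x mod d = y mod d" using h unfolding Ed_def by (auto simp: doubleton_eq_iff)
    hence "Suc (Suc x) mod d = x mod d" by (metis mod_Suc_eq)
    hence "d dvd 2" using mod_eq_dvd_iff_nat[of x "Suc (Suc x)" d] by simp
    thus False using assms by (metis dvd_imp_le le_trans numeral_le_iff semiring_norm(69) semiring_norm(72) zero_less_numeral not_less_eq_eq numeral_3_eq_3 numeral_2_eq_2)
  qed
next
  assume "x mod d = y mod d"
  thus "Ed d x = Ed d y" unfolding Ed_def by (metis mod_Suc_eq)
qed

lemma mem_G_rim: assumes "d \<ge> 3" "k < d"
  shows "Ed d k \<in> Gw d t a j Z \<longleftrightarrow> (\<exists>r\<in>{..<t-2}. (j+r) mod d = k)"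
proof -
  have "Ed d k \<noteq> {Inl a, Inr x}" for x unfolding Ed_def by auto
  hence "Ed d k \<in> Gw d t a j Z \<longleftrightarrow> (\<exists>r\<in>{..<t-2}. Ed d (j+r) = Ed d k)" unfolding Gw_def by auto
  also have "\<dots> \<longleftrightarrow> (\<exists>r\<in>{..<t-2}. (j+r) mod d = k)" using Ed_eq[OF assms(1)] assms(2) by simp
  finally show ?thesis .
qed

lemma mem_G_spoke: assumes "x < d"
  shows "{Inl b, Inr x} \<in> Gw d t a j Z \<longleftrightarrow> b = a \<and> (\<exists>z\<in>Z. (j+z) mod d = x)"
  using assms unfolding Gw_def Ed_def by (auto simp: doubleton_eq_iff)

lemma wheel_cases: assumes "e \<in> wheel_edges d s"
  shows "(\<exists>b x. b<s \<and> x<d \<and> e = {Inl b, Inr x}) \<or> (\<exists>k<d. e = Ed d k)"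
  using assms unfolding wheel_edges_def spokes_def rim_edges_def Ed_def by auto



definition sc :: "nat \<Rightarrow> nat \<Rightarrow> nat" where "sc t v = (if v = t then 1 else v + 1)"

lemma L1: fixes a b j d :: nat assumes "a < d" "b < d" "(j + a) mod d = (j + b) mod d" shows "a = b"
proof -
  have "a mod d = b mod d" using assms(3) by (simp add: nat_mod_eq_iff)
  thus ?thesis using assms(1,2) by simp
qed

lemma theta_mem:
  assumes "x \<in> {1..t}" "y \<in> {1..t}" "t \<ge> 3"
  shows "{x,y} \<in> theta_edges t I \<longleftrightarrow> (y = sc t x \<or> x = sc t y \<or> (x = 1 \<and> y \<in> I) \<or> (y = 1 \<and> x \<in> I))"
  using assms unfolding theta_edges_def sc_def by (auto simp: doubleton_eq_iff split: if_splits)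

lemma theta_edge_form:
  assumes "e \<in> theta_edges t I" "I \<subseteq> {3..<t}" "t \<ge> 3"
  shows "\<exists>x y. e = {x,y} \<and> x \<in> {1..t} \<and> y \<in> {1..t} \<and> x \<noteq> y \<and> (y = sc t x \<or> (x = 1 \<and> y \<in> I))"
proof -
  consider (a) i where "e = {i, i+1}" "1 \<le> i" "i < t" | (b) "e = {t, 1}" | (c) i where "e = {1, i}" "i \<in> I"
    using assms(1) unfolding theta_edges_def by blast
  thus ?thesis
  proof cases
    case (a i)
    have "i + 1 = sc t i" using a by (simp add: sc_def)
    thus ?thesis using a by (intro exI[of _ i] exI[of _ "i+1"]) simp
  next
    case b
    have "1 = sc t t" "t \<in> {1..t}" "(1::nat) \<in> {1..t}" "t \<noteq> 1" using assms(3) by (auto simp: sc_def)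
    thus ?thesis using b by (intro exI[of _ t] exI[of _ 1]) simp
  next
    case (c i)
    have "i \<in> {1..t}" "(1::nat) \<in> {1..t}" "1 \<noteq> i" using c assms(2,3) by auto
    thus ?thesis using c by (intro exI[of _ 1] exI[of _ i]) simp
  qed
qed

definition cc :: "nat \<Rightarrow> nat \<Rightarrow> nat \<Rightarrow> nat" where "cc t m q = (m - 1 + q) mod t + 1"

lemma cc_range: "t \<ge> 1 \<Longrightarrow> cc t m q \<in> {1..t}"
  unfolding cc_def by (simp add: Suc_leI)

lemma cc_0: "m \<in> {1..t} \<Longrightarrow> cc t m 0 = m"
  unfolding cc_def by auto

lemma cc_t: assumes "m \<in> {1..t}" shows "cc t m t = m"
proof -
  obtain m' where m: "m = Suc m'" using assms by (cases m) auto
  thus ?thesis unfolding cc_def using assms by simp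
qed

lemma cc_Suc: assumes "m \<in> {1..t}" shows "cc t m (Suc q) = sc t (cc t m q)"
proof -
  obtain m' where m: "m = Suc m'" using assms by (cases m) auto
  have "(m' + Suc q) mod t + 1 = (if (m'+q) mod t + 1 = t then 1 else (m'+q) mod t + 1 + (1::nat))"
    using add_Suc_right mod_Suc by presburger
  thus ?thesis unfolding cc_def sc_def m by simp
qed

lemma cc_inj: "m \<in> {1..t} \<Longrightarrow> q < t \<Longrightarrow> q' < t \<Longrightarrow> cc t m q = cc t m q' \<Longrightarrow> q = q'"
  unfolding cc_def using L1[of q t q' "m-1"] by simp

lemma cc_surj: assumes "m \<in> {1..t}" "x \<in> {1..t}" shows "\<exists>q<t. cc t m q = x"
proof -
  have "inj_on (cc t m) {..<t}" using cc_inj[OF assms(1)] by (meson inj_onI lessThan_iff)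
  hence "card (cc t m ` {..<t}) = t" by (simp add: card_image)
  moreover have "cc t m ` {..<t} \<subseteq> {1..t}" using cc_range assms(1) by auto
  ultimately have "cc t m ` {..<t} = {1..t}" by (metis card_atLeastAtMost card_subset_eq diff_Suc_1 finite_atLeastAtMost)
  hence "x \<in> cc t m ` {..<t}" using assms(2) by simp
  thus ?thesis by auto
qed

lemma Suc_mod_cancel: fixes a b d :: nat assumes "a < d" "b < d" "Suc a mod d = Suc b mod d" shows "a = b"
  using L1[of a d b 1] assms by simp

lemma dir:
  fixes x :: "nat \<Rightarrow> nat"
  assumes lt: "\<forall>i\<le>N. x i < d" and inj: "\<forall>i\<le>N. \<forall>i'\<le>N. x i = x i' \<longrightarrow> i = i'"
    and st: "\<forall>i<N. x (Suc i) = Suc (x i) mod d \<or> x i = Suc (x (Suc i)) mod d"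
  shows "(\<forall>i\<le>N. x i = (x 0 + i) mod d) \<or> (\<forall>i\<le>N. x i = (x N + (N - i)) mod d)"
proof -
  define fw where "fw i \<longleftrightarrow> x (Suc i) = Suc (x i) mod d" for i
  define bw where "bw i \<longleftrightarrow> x i = Suc (x (Suc i)) mod d" for i
  have ns1: "\<not> bw (Suc i)" if "Suc i < N" "fw i" for i
  proof
    assume "bw (Suc i)"
    hence "Suc (x i) mod d = Suc (x (Suc (Suc i))) mod d" using that(2) unfolding fw_def bw_def by simp
    moreover have "x i < d" "x (Suc (Suc i)) < d" using lt that(1) by auto
    ultimately have "x i = x (Suc (Suc i))" using Suc_mod_cancel by blast
    thus False using inj[rule_format, of i "Suc (Suc i)"] that(1) by simp
  qed
  have ns2: "\<not> fw (Suc i)" if "Suc i < N" "bw i" for i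
  proof
    assume "fw (Suc i)"
    hence "x i = x (Suc (Suc i))" using that(2) unfolding fw_def bw_def by simp
    thus False using inj[rule_format, of i "Suc (Suc i)"] that(1) by simp
  qed
  have fb: "fw i \<or> bw i" if "i < N" for i using st that unfolding fw_def bw_def by blast
  show ?thesis
  proof (cases "N = 0")
    case True thus ?thesis using lt by simp
  next
    case False
    show ?thesis
    proof (cases "fw 0")
      case True
      have allf: "i < N \<longrightarrow> fw i" for i
      proof (induction i)
        case 0 thus ?case using True by simp
      next
        case (Suc i) thus ?case using ns1[of i] fb[of "Suc i"] by auto
      qed
      have "i \<le> N \<longrightarrow> x i = (x 0 + i) mod d" for i
      proof (induction i)
        case 0 thus ?case using lt by simp
      next
        case (Suc i)
        show ?case
        proof
          assume "Suc i \<le> N"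
          hence "x (Suc i) = Suc (x i) mod d" using allf[of i] unfolding fw_def by simp
          also have "\<dots> = Suc ((x 0 + i) mod d) mod d" using Suc \<open>Suc i \<le> N\<close> by simp
          also have "\<dots> = (x 0 + Suc i) mod d" by (simp add: mod_Suc_eq)
          finally show "x (Suc i) = (x 0 + Suc i) mod d" .
        qed
      qed
      thus ?thesis by blast
    next
      case False
      hence b0: "bw 0" using fb \<open>N \<noteq> 0\<close> by blast
      have allb: "i < N \<longrightarrow> bw i" for i
      proof (induction i)
        case 0 thus ?case using b0 by simp
      next
        case (Suc i) thus ?case using ns2[of i] fb[of "Suc i"] by auto
      qed
      have "k \<le> N \<longrightarrow> x (N - k) = (x N + k) mod d" for k
      proof (induction k)
        case 0 thus ?case using lt by simp
      next
        case (Suc k)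
        show ?case
        proof
          assume k: "Suc k \<le> N"
          have e: "Suc (N - Suc k) = N - k" using k by simp
          have "x (N - Suc k) = Suc (x (Suc (N - Suc k))) mod d" using allb[of "N - Suc k"] k unfolding bw_def by simp
          also have "\<dots> = Suc (x (N - k)) mod d" using e by simp
          also have "\<dots> = Suc ((x N + k) mod d) mod d" using Suc k by simp
          also have "\<dots> = (x N + Suc k) mod d" by (simp add: mod_Suc_eq)
          finally show "x (N - Suc k) = (x N + Suc k) mod d" .
        qed
      qed
      hence "i \<le> N \<longrightarrow> x i = (x N + (N - i)) mod d" for i
        by (metis diff_diff_cancel diff_le_self)
      thus ?thesis by blast
    qed
  qed
qed


lemma dvd_small_zero: fixes w :: int assumes "d dvd w" "\<bar>w\<bar> < d" shows "w = 0"
  using assms dvd_imp_le_int by force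

lemma GL:
  fixes Z1 Z2 :: "nat set" and n d c1 c2 :: nat
  assumes Z1: "Z1 \<subseteq> {..<n}" and Z2: "Z2 \<subseteq> {..<n}" and dn: "2*n \<le> d + 1" and c1: "c1 < d"
  shows "\<exists>D::int. (int c2 - int c1 - D) mod int d = 0 \<and>
    card {j. j<d \<and> (\<exists>z1\<in>Z1. (j+z1) mod d = c1) \<and> (\<exists>z2\<in>Z2. (j+z2) mod d = c2)}
     \<le> card {z\<in>Z1. \<exists>z2\<in>Z2. int z2 = int z + D}"
proof (cases "{j. j<d \<and> (\<exists>z1\<in>Z1. (j+z1) mod d = c1) \<and> (\<exists>z2\<in>Z2. (j+z2) mod d = c2)} = {}")
  case True
  show ?thesis by (rule exI[of _ "int c2 - int c1"]) (simp add: True)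
next
  case False
  let ?J = "{j. j<d \<and> (\<exists>z1\<in>Z1. (j+z1) mod d = c1) \<and> (\<exists>z2\<in>Z2. (j+z2) mod d = c2)}"
  from False obtain j0 z10 z20 where j0: "j0 < d" "z10 \<in> Z1" "(j0+z10) mod d = c1" "z20 \<in> Z2" "(j0+z20) mod d = c2"
    by blast
  define D where "D = int z20 - int z10"
  have Dc: "(int c2 - int c1 - D) mod int d = 0"
  proof -
    have "int c1 = (int j0 + int z10) mod int d" using j0(3) by (metis of_nat_add zmod_int)
    moreover have "int c2 = (int j0 + int z20) mod int d" using j0(5) by (metis of_nat_add zmod_int)
    ultimately have "int d dvd (int j0 + int z20) - (int j0 + int z10) - (int c2 - int c1)"
      by (metis mod_eq_dvd_iff dvd_diff mod_diff_eq mod_mod_trivial)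
    hence "int d dvd (int c2 - int c1 - D)" unfolding D_def
      by (metis (no_types, lifting) add_diff_cancel_left dvd_minus_iff minus_diff_eq)
    thus ?thesis by simp
  qed
  let ?S = "{z\<in>Z1. \<exists>z2\<in>Z2. int z2 = int z + D}"
  have fin: "finite ?S" by (rule finite_subset[of _ "{..<n}"]) (use Z1 in auto)
  have sub: "?J \<subseteq> (\<lambda>z. nat ((int c1 - int z) mod int d)) ` ?S"
  proof
    fix j assume "j \<in> ?J"
    then obtain z1 z2 where j: "j < d" "z1 \<in> Z1" "(j+z1) mod d = c1" "z2 \<in> Z2" "(j+z2) mod d = c2" by blast
    have e1: "(int j + int z1) mod int d = int c1" using j(3) by (metis of_nat_add zmod_int)
    have e2: "(int j + int z2) mod int d = int c2" using j(5) by (metis of_nat_add zmod_int)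
    have e3: "(int j0 + int z10) mod int d = int c1" using j0(3) by (metis of_nat_add zmod_int)
    have e4: "(int j0 + int z20) mod int d = int c2" using j0(5) by (metis of_nat_add zmod_int)
    have dv: "int d dvd (int z2 - int z1) - D"
    proof -
      have "int d dvd (int j + int z2) - (int j + int z1) - ((int j0 + int z20) - (int j0 + int z10))"
        by (metis e1 e2 e3 e4 mod_diff_eq mod_eq_dvd_iff)
      thus ?thesis unfolding D_def by (simp add: algebra_simps)
    qed
    have "z1 < n" "z2 < n" "z10 < n" "z20 < n" using j(2,4) j0(2,4) Z1 Z2 by auto
    hence "\<bar>(int z2 - int z1) - D\<bar> < int d" using dn unfolding D_def by linarith
    hence "int z2 = int z1 + D" using dvd_small_zero[OF dv] by simp
    hence "z1 \<in> ?S" using j by blast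
    moreover have "j = nat ((int c1 - int z1) mod int d)"
    proof -
      have "(int c1 - int z1) mod int d = (int j + int z1 - int z1) mod int d" using e1 by (metis mod_diff_left_eq)
      thus ?thesis using j(1) by simp
    qed
    ultimately show "j \<in> (\<lambda>z. nat ((int c1 - int z) mod int d)) ` ?S" by blast
  qed
  have "card ?J \<le> card ((\<lambda>z. nat ((int c1 - int z) mod int d)) ` ?S)"
    by (rule card_mono[OF finite_imageI[OF fin] sub])
  also have "\<dots> \<le> card ?S" by (rule card_image_le[OF fin])
  finally have "card ?J \<le> card ?S" .
  with Dc show ?thesis by (intro exI[where x=D] conjI)
qed

lemma B1:
  fixes D :: int assumes "D \<noteq> 0"
  shows "card {z\<in>{..<m::nat}. \<exists>z2\<in>{..<m}. int z2 = int z + D} \<le> m - 1"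
proof (cases "D > 0")
  case True
  have sub: "{z\<in>{..<m::nat}. \<exists>z2\<in>{..<m}. int z2 = int z + D} \<subseteq> {..<m-1}"
  proof
    fix z assume "z \<in> {z\<in>{..<m::nat}. \<exists>z2\<in>{..<m}. int z2 = int z + D}"
    then obtain z2 where "z < m" "z2 < m" "int z2 = int z + D" by auto
    thus "z \<in> {..<m-1}" using True by simp
  qed
  have "card {z\<in>{..<m::nat}. \<exists>z2\<in>{..<m}. int z2 = int z + D} \<le> card {..<m-1}"
    by (rule card_mono[OF finite_lessThan sub])
  thus ?thesis by simp
next
  case False
  have sub: "{z\<in>{..<m::nat}. \<exists>z2\<in>{..<m}. int z2 = int z + D} \<subseteq> {1..<m}"
  proof
    fix z assume "z \<in> {z\<in>{..<m::nat}. \<exists>z2\<in>{..<m}. int z2 = int z + D}"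
    then obtain z2 where "z < m" "z2 < m" "int z2 = int z + D" by auto
    thus "z \<in> {1..<m}" using False assms by simp
  qed
  have "card {z\<in>{..<m::nat}. \<exists>z2\<in>{..<m}. int z2 = int z + D} \<le> card {1..<m}"
    by (rule card_mono[OF finite_atLeastLessThan sub])
  thus ?thesis by simp
qed

lemma B2:
  fixes D :: int and Z :: "nat set" assumes "D \<noteq> 0" "Z \<subseteq> {..<n}" "0 \<in> Z" "n - 1 \<in> Z" "n \<ge> 1"
  shows "card {z\<in>Z. \<exists>z2\<in>Z. int z2 = int z + D} \<le> card Z - 1"
proof -
  have fin: "finite Z" using assms(2) finite_subset by blast
  obtain w where w: "w \<in> Z" "{z\<in>Z. \<exists>z2\<in>Z. int z2 = int z + D} \<subseteq> Z - {w}"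
  proof (cases "D > 0")
    case True
    have "{z\<in>Z. \<exists>z2\<in>Z. int z2 = int z + D} \<subseteq> Z - {n-1}" using True assms(2,5) by force
    thus ?thesis using that assms(4) by blast
  next
    case False
    have "{z\<in>Z. \<exists>z2\<in>Z. int z2 = int z + D} \<subseteq> Z - {0}" using False assms(1) by force
    thus ?thesis using that assms(3) by blast
  qed
  have "card {z\<in>Z. \<exists>z2\<in>Z. int z2 = int z + D} \<le> card (Z - {w})"
    by (rule card_mono[OF _ w(2)]) (use fin in auto)
  also have "\<dots> = card Z - 1" using w(1) fin by simp
  finally show ?thesis .
qed

lemma B3:
  fixes D :: int and Z :: "nat set" assumes "Z \<subseteq> {..<Suc m}" "0 \<in> Z" "m \<in> Z" "Z \<noteq> {..<Suc m}"
  shows "card {z\<in>{..<m}. \<exists>z2\<in>Z. int z2 = int z + D} \<le> m - 1"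
proof (rule ccontr)
  let ?S = "{z\<in>{..<m}. \<exists>z2\<in>Z. int z2 = int z + D}"
  assume "\<not> ?thesis"
  hence "card ?S \<ge> m" by simp
  moreover have "?S \<subseteq> {..<m}" by auto
  ultimately have Seq: "?S = {..<m}" by (metis card_lessThan card_seteq finite_lessThan)
  have m1: "m \<ge> 1"
  proof (rule ccontr)
    assume "\<not> m \<ge> 1"
    hence "m = 0" by simp
    hence "Z = {..<Suc m}" using assms(1,2) by auto
    thus False using assms(4) by simp
  qed
  have "0 \<in> ?S" "m - 1 \<in> ?S" using Seq m1 by auto
  then obtain u v where uv: "u \<in> Z" "int u = D" "v \<in> Z" "int v = int (m-1) + D" by auto
  have "v \<le> m" using uv(3) assms(1) by auto
  hence D01: "D = 0 \<or> D = 1" using uv m1 by linarith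
  have "{..<Suc m} \<subseteq> Z"
  proof
    fix x assume x: "x \<in> {..<Suc m}"
    show "x \<in> Z"
    proof (cases "D = 0")
      case True
      show ?thesis
      proof (cases "x = m")
        case False hence "x \<in> ?S" using x Seq by auto
        thus ?thesis using True by auto
      qed (use assms(3) in simp)
    next
      case False
      hence D1: "D = 1" using D01 by simp
      show ?thesis
      proof (cases "x = 0")
        case False hence "x - 1 \<in> ?S" using x Seq by auto
        then obtain z2 where "z2 \<in> Z" "int z2 = int (x - 1) + 1" using D1 by auto
        thus ?thesis using False by (metis Suc_pred' add.commute bot_nat_0.not_eq_extremum of_nat_Suc of_nat_eq_iff plus_1_eq_Suc)
      qed (use assms(2) in simp)
    qed
  qed
  thus False using assms(1,4) by blast
qed

lemma ifle1: "(x::nat) \<le> a \<Longrightarrow> x \<le> (if P then max a b else a)" by (simp add: le_max_iff_disj)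
lemma ifle2: "(x::nat) \<le> b \<Longrightarrow> (\<not> P \<Longrightarrow> x \<le> a) \<Longrightarrow> x \<le> (if P then max a b else a)" by auto

lemma count_T:
  fixes Z :: "nat set"
  assumes d: "d \<ge> 2 * t - 3" and t: "t \<ge> 4" and s: "s \<ge> 1"
    and Z: "Z \<subseteq> {..<t-1}" "0 \<in> Z" "t - 2 \<in> Z"
    and e1: "e1 \<in> wheel_edges d s" and e2: "e2 \<in> wheel_edges d s" and ne: "e1 \<noteq> e2"
  shows "card {(a,j). a<s \<and> j<d \<and> e1 \<in> Gw d t a j Z \<and> e2 \<in> Gw d t a j Z}
     \<le> (if Z = {..<t-1} then max (s*(t-3)) (t-2) else s*(t-3))"
proof -
  let ?T = "{(a,j). a<s \<and> j<d \<and> e1 \<in> Gw d t a j Z \<and> e2 \<in> Gw d t a j Z}"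
  have d3: "d \<ge> 3" and dn: "2 * (t-1) \<le> d + 1" using d t by auto
  have R: "{..<t-2} \<subseteq> {..<t-1}" by auto
  have finZ: "finite Z" using Z(1) finite_subset by blast
  have cardZ: "card Z \<le> t - 1" using card_mono[OF _ Z(1)] by simp
  have cardZ2: "card Z \<le> t - 2" if "Z \<noteq> {..<t-1}"
  proof -
    have "Z \<subset> {..<t-1}" using that Z(1) by blast
    hence "card Z < card {..<t-1}" by (rule psubset_card_mono[OF finite_lessThan])
    thus ?thesis by simp
  qed
  have Z2: "Z \<subseteq> {..<Suc (t-2)}" "t - 2 \<in> Z" "Z \<noteq> {..<Suc (t-2)} \<longleftrightarrow> Z \<noteq> {..<t-1}"
    using Z t by (auto simp: Suc_diff_Suc numeral_2_eq_2)
  have fin: "finite ?T"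
    by (rule finite_subset[of _ "{..<s} \<times> {..<d}"]) auto
  have hubfix: "card ?T \<le> card J" if "?T \<subseteq> {b} \<times> J" "finite J" for b J
  proof -
    have "card ?T \<le> card ({b} \<times> J)" by (rule card_mono) (use that in auto)
    also have "\<dots> = card J" by (simp add: card_cartesian_product)
    finally show ?thesis .
  qed
  show ?thesis
  proof (cases "\<exists>k<d. e1 = Ed d k")
    case True
    then obtain k1 where k1: "k1 < d" "e1 = Ed d k1" by blast
    show ?thesis
    proof (cases "\<exists>k<d. e2 = Ed d k")
      case True
      then obtain k2 where k2: "k2 < d" "e2 = Ed d k2" by blast
      have "k1 \<noteq> k2" using ne k1 k2 by auto
      let ?J = "{j. j<d \<and> (\<exists>z1\<in>{..<t-2}. (j+z1) mod d = k1) \<and> (\<exists>z2\<in>{..<t-2}. (j+z2) mod d = k2)}"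
      obtain D where D: "(int k2 - int k1 - D) mod int d = 0"
        "card ?J \<le> card {z\<in>{..<t-2}. \<exists>z2\<in>{..<t-2}. int z2 = int z + D}"
        using GL[OF R R dn k1(1), of k2] by (elim exE conjE) assumption
      have "D \<noteq> 0"
      proof
        assume "D = 0"
        hence "int k2 mod int d = int k1 mod int d" using D(1) by (metis diff_zero mod_eq_dvd_iff dvd_eq_mod_eq_0)
        thus False using \<open>k1 \<noteq> k2\<close> k1 k2 by simp
      qed
      hence cJ: "card ?J \<le> t - 3" using B1[of D "t-2"] D(2) by simp
      have "?T = {..<s} \<times> ?J" using k1 k2 by (auto simp: mem_G_rim[OF d3])
      hence "card ?T = s * card ?J" by (simp add: card_cartesian_product)
      also have "\<dots> \<le> s * (t-3)" using cJ by simp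
      finally show ?thesis by (rule ifle1)
    next
      case False
      then obtain b x where bx: "b < s" "x < d" "e2 = {Inl b, Inr x}" using wheel_cases[OF e2] by blast
      let ?J = "{j. j<d \<and> (\<exists>z1\<in>{..<t-2}. (j+z1) mod d = k1) \<and> (\<exists>z2\<in>Z. (j+z2) mod d = x)}"
      obtain D where D: "card ?J \<le> card {z\<in>{..<t-2}. \<exists>z2\<in>Z. int z2 = int z + D}"
        using GL[OF R Z(1) dn k1(1), of x] by (elim exE conjE) assumption
      have "?T \<subseteq> {b} \<times> ?J" using k1 bx by (auto simp: mem_G_rim[OF d3] mem_G_spoke)
      hence cT: "card ?T \<le> card ?J" by (rule hubfix) simp
      have "card {z\<in>{..<t-2}. \<exists>z2\<in>Z. int z2 = int z + D} \<le> t - 2"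
        by (rule order.trans[OF card_mono[of "{..<t-2}"]]) auto
      moreover have "card {z\<in>{..<t-2}. \<exists>z2\<in>Z. int z2 = int z + D} \<le> t - 3" if "Z \<noteq> {..<t-1}"
        using B3[of Z "t-2" D] Z2 Z(2) that by simp
      ultimately show ?thesis
      proof (intro ifle2)
        assume A: "card {z\<in>{..<t-2}. \<exists>z2\<in>Z. int z2 = int z + D} \<le> t - 2"
          and B: "Z \<noteq> {..<t-1} \<Longrightarrow> card {z\<in>{..<t-2}. \<exists>z2\<in>Z. int z2 = int z + D} \<le> t - 3"
        show "card ?T \<le> t - 2" using cT D A by linarith
        assume "\<not> Z = {..<t-1}"
        hence "card ?T \<le> t - 3" using cT D B by linarith
        also have "\<dots> \<le> s * (t-3)" using s by simp
        finally show "card ?T \<le> s * (t-3)" .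
      qed
    qed
  next
    case False
    then obtain b1 x1 where bx1: "b1 < s" "x1 < d" "e1 = {Inl b1, Inr x1}" using wheel_cases[OF e1] by blast
    show ?thesis
    proof (cases "\<exists>k<d. e2 = Ed d k")
      case True
      then obtain k2 where k2: "k2 < d" "e2 = Ed d k2" by blast
      let ?J = "{j. j<d \<and> (\<exists>z1\<in>{..<t-2}. (j+z1) mod d = k2) \<and> (\<exists>z2\<in>Z. (j+z2) mod d = x1)}"
      obtain D where D: "card ?J \<le> card {z\<in>{..<t-2}. \<exists>z2\<in>Z. int z2 = int z + D}"
        using GL[OF R Z(1) dn k2(1), of x1] by (elim exE conjE) assumption
      have "?T \<subseteq> {b1} \<times> ?J" using k2 bx1 by (auto simp: mem_G_rim[OF d3] mem_G_spoke)
      hence cT: "card ?T \<le> card ?J" by (rule hubfix) simp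
      have "card {z\<in>{..<t-2}. \<exists>z2\<in>Z. int z2 = int z + D} \<le> t - 2"
        by (rule order.trans[OF card_mono[of "{..<t-2}"]]) auto
      moreover have "card {z\<in>{..<t-2}. \<exists>z2\<in>Z. int z2 = int z + D} \<le> t - 3" if "Z \<noteq> {..<t-1}"
        using B3[of Z "t-2" D] Z2 Z(2) that by simp
      ultimately show ?thesis
      proof (intro ifle2)
        assume A: "card {z\<in>{..<t-2}. \<exists>z2\<in>Z. int z2 = int z + D} \<le> t - 2"
          and B: "Z \<noteq> {..<t-1} \<Longrightarrow> card {z\<in>{..<t-2}. \<exists>z2\<in>Z. int z2 = int z + D} \<le> t - 3"
        show "card ?T \<le> t - 2" using cT D A by linarith
        assume "\<not> Z = {..<t-1}"
        hence "card ?T \<le> t - 3" using cT D B by linarith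
        also have "\<dots> \<le> s * (t-3)" using s by simp
        finally show "card ?T \<le> s * (t-3)" .
      qed
    next
      case False
      then obtain b2 x2 where bx2: "b2 < s" "x2 < d" "e2 = {Inl b2, Inr x2}" using wheel_cases[OF e2] by blast
      show ?thesis
      proof (cases "b1 = b2")
        case False
        hence "?T = {}" using bx1 bx2 by (auto simp: mem_G_spoke)
        hence "card ?T = 0" by (simp only: card.empty)
        thus ?thesis by (intro ifle1) simp
      next
        case True
        have "x1 \<noteq> x2" using ne bx1 bx2 True by auto
        let ?J = "{j. j<d \<and> (\<exists>z1\<in>Z. (j+z1) mod d = x1) \<and> (\<exists>z2\<in>Z. (j+z2) mod d = x2)}"
        obtain D where D: "(int x2 - int x1 - D) mod int d = 0"
          "card ?J \<le> card {z\<in>Z. \<exists>z2\<in>Z. int z2 = int z + D}"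
          using GL[OF Z(1) Z(1) dn bx1(2), of x2] by (elim exE conjE) assumption
        have "D \<noteq> 0"
        proof
          assume "D = 0"
          hence "int x2 mod int d = int x1 mod int d" using D(1) by (metis diff_zero mod_eq_dvd_iff dvd_eq_mod_eq_0)
          thus False using \<open>x1 \<noteq> x2\<close> bx1 bx2 by simp
        qed
        have tt: "t - 1 - 1 \<in> Z" using Z(3) by (metis diff_diff_left one_add_one)
        have "card {z\<in>Z. \<exists>z2\<in>Z. int z2 = int z + D} \<le> card Z - 1"
          by (rule B2[OF \<open>D \<noteq> 0\<close> Z(1) Z(2) tt]) (use t in simp)
        hence cJ: "card ?J \<le> card Z - 1" using D(2) by linarith
        have "?T \<subseteq> {b1} \<times> ?J" using bx1 bx2 True by (auto simp: mem_G_spoke)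
        hence cT: "card ?T \<le> card ?J" by (rule hubfix) simp
        show ?thesis
        proof (rule ifle2)
          show "card ?T \<le> t - 2" using cT cJ cardZ by linarith
          show "card ?T \<le> s * (t-3)" if "Z \<noteq> {..<t-1}"
          proof -
            have "card ?T \<le> t - 3" using cT cJ cardZ2[OF that] by linarith
            also have "\<dots> \<le> s * (t-3)" using s by simp
            finally show ?thesis .
          qed
        qed
      qed
    qed
  qed
qed


definition S1 :: "nat \<Rightarrow> nat set \<Rightarrow> nat set" where "S1 t I = {0, t-2} \<union> (\<lambda>i. i - 2) ` I"
definition rv :: "nat \<Rightarrow> nat set \<Rightarrow> nat set" where "rv t Z = (\<lambda>z. t - 2 - z) ` Z"

lemma char:
  fixes H :: "(nat+nat) set set"
  assumes t: "t \<ge> 4" and d: "d \<ge> 2*t-3" and I: "I \<subseteq> {3..<t}"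
    and Hw: "H \<subseteq> wheel_edges d s" and iso: "iso_theta t I H" and one: "card (\<Union>H \<inter> hubs s) = 1"
  shows "\<exists>a<s. \<exists>j<d. \<exists>Z. (Z = S1 t I \<or> Z = rv t (S1 t I)) \<and> H = Gw d t a j Z"
proof -
  have t3: "t \<ge> 3" and d0: "d > 0" and dt: "t - 1 < d" using t d by auto
  obtain f where bij: "bij_betw f {1..t} (\<Union>H)" and Hf: "H = (\<lambda>e. f ` e) ` theta_edges t I"
    using iso unfolding iso_theta_def by blast
  have inj: "inj_on f {1..t}" using bij by (rule bij_betw_imp_inj_on)
  have fim: "f ` {1..t} = \<Union>H" using bij by (rule bij_betw_imp_surj_on)
  obtain u where u: "\<Union>H \<inter> hubs s = {u}" by (rule card_1_singletonE[OF one])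
  have "u \<in> hubs s" using u by (metis Int_iff insertI1)
  then obtain a where a: "a < s" "u = Inl a" unfolding hubs_def by blast
  have "u \<in> f ` {1..t}" using u fim by (metis Int_iff insertI1)
  then obtain m where m: "m \<in> {1..t}" "f m = Inl a" using a by auto
  have edge: "{f x, f y} \<in> H" if "{x,y} \<in> theta_edges t I" for x y
  proof -
    have "(\<lambda>e. f ` e) {x,y} \<in> (\<lambda>e. f ` e) ` theta_edges t I" using that by (rule imageI)
    thus ?thesis using Hf by simp
  qed
  have rimv: "\<exists>x<d. f v = Inr x" if "v \<in> {1..t}" "v \<noteq> m" for v
  proof -
    have "f v \<in> f ` {1..t}" using that(1) by (rule imageI)
    hence fvH: "f v \<in> \<Union>H" using fim by simp
    then obtain e where e: "e \<in> H" "f v \<in> e" by blast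
    have ew: "e \<in> wheel_edges d s" using Hw e(1) by blast
    show ?thesis
    proof (cases "f v")
      case (Inl b)
      from wheel_cases[OF ew] have "b < s"
      proof (elim disjE exE conjE)
        fix b' x' assume "b' < s" "e = {Inl b', Inr x'}" thus "b < s" using e(2) Inl by simp
      next
        fix k' assume "e = Ed d k'" thus "b < s" using e(2) Inl unfolding Ed_def by simp
      qed
      hence "f v \<in> hubs s" unfolding hubs_def using Inl by auto
      hence "f v \<in> \<Union>H \<inter> hubs s" using fvH by (intro IntI)
      hence "f v = u" using u by simp
      hence "f v = f m" using a m by simp
      hence "v = m" using inj that(1) m(1) by (meson inj_on_def)
      thus ?thesis using that(2) by simp
    next
      case (Inr x)
      from wheel_cases[OF ew] have "x < d"
      proof (elim disjE exE conjE)
        fix b' x' assume "x' < d" "e = {Inl b', Inr x'}" thus "x < d" using e(2) Inr by simp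
      next
        fix k' assume "e = Ed d k'" thus "x < d" using e(2) Inr d0 unfolding Ed_def by auto
      qed
      thus ?thesis using Inr by blast
    qed
  qed
  define c where "c = cc t m"
  have c0: "c 0 = m" and ct: "c t = m" using cc_0[OF m(1)] cc_t[OF m(1)] c_def by auto
  have cS: "c (Suc q) = sc t (c q)" for q using cc_Suc[OF m(1)] c_def by auto
  have cr: "c q \<in> {1..t}" for q using cc_range t c_def by auto
  have cinj: "q = q'" if "q < t" "q' < t" "c q = c q'" for q q' using cc_inj[OF m(1)] that c_def by auto
  have csurj: "\<exists>q<t. c q = y" if "y \<in> {1..t}" for y using cc_surj[OF m(1) that] c_def by auto
  have cnm: "c q \<noteq> m" if "1 \<le> q" "q < t" for q
    using cinj[of q 0] that c0 by auto
  define k where "k q = projr (f (c q))" for q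
  have fk: "f (c q) = Inr (k q) \<and> k q < d" if q: "1 \<le> q" "q < t" for q
  proof -
    obtain y where "y < d" "f (c q) = Inr y" using rimv[OF cr cnm[OF q]] by blast
    thus ?thesis unfolding k_def by simp
  qed
  have adjw: "y = Suc x mod d \<or> x = Suc y mod d" if "{Inr x, Inr y} \<in> wheel_edges d s" for x y
    using that unfolding wheel_edges_def spokes_def rim_edges_def by (auto simp: doubleton_eq_iff)
  define N where "N = t - 2"
  define x where "x i = k (Suc i)" for i
  have xlt: "\<forall>i\<le>N. x i < d" using fk t unfolding x_def N_def by auto
  have xinj: "\<forall>i\<le>N. \<forall>i'\<le>N. x i = x i' \<longrightarrow> i = i'"
  proof (intro allI impI)
    fix i i' assume h: "i \<le> N" "i' \<le> N" "x i = x i'"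
    hence "f (c (Suc i)) = f (c (Suc i'))" using fk[of "Suc i"] fk[of "Suc i'"] t unfolding x_def N_def by auto
    hence "c (Suc i) = c (Suc i')" using inj cr by (meson inj_on_def)
    thus "i = i'" using cinj[of "Suc i" "Suc i'"] h t unfolding N_def by auto
  qed
  have xst: "\<forall>i<N. x (Suc i) = Suc (x i) mod d \<or> x i = Suc (x (Suc i)) mod d"
  proof (intro allI impI)
    fix i assume i: "i < N"
    have "{c (Suc i), c (Suc (Suc i))} \<in> theta_edges t I" using theta_mem[OF cr[of "Suc i"] cr[of "Suc (Suc i)"] t3] cS[of "Suc i"] by simp
    hence "{f (c (Suc i)), f (c (Suc (Suc i)))} \<in> wheel_edges d s" using edge Hw by blast
    hence "{Inr (x i), Inr (x (Suc i))} \<in> wheel_edges d s"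
      using fk[of "Suc i"] fk[of "Suc (Suc i)"] i unfolding x_def N_def by auto
    thus "x (Suc i) = Suc (x i) mod d \<or> x i = Suc (x (Suc i)) mod d" using adjw by blast
  qed
  define fw where "fw \<longleftrightarrow> (\<forall>i\<le>N. x i = (x 0 + i) mod d)"
  have bw: "\<not> fw \<Longrightarrow> \<forall>i\<le>N. x i = (x N + (N - i)) mod d" using dir[OF xlt xinj xst] unfolding fw_def by blast
  define j where "j = (if fw then x 0 else x N)"
  define pos where "pos q = (if fw then q - 1 else t - 1 - q)" for q
  have jd: "j < d" using xlt unfolding j_def by auto
  have fpos: "f (c q) = Inr ((j + pos q) mod d)" if q: "1 \<le> q" "q < t" for q
  proof -
    have q1: "q - 1 \<le> N" using q unfolding N_def by simp
    have xk: "x (q - 1) = k q" unfolding x_def using q by simp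
    have fq: "f (c q) = Inr (k q)" using fk[OF q] by blast
    show ?thesis
    proof (cases fw)
      case True
      have "x (q - 1) = (x 0 + (q - 1)) mod d" using True[unfolded fw_def] q1 by blast
      moreover have "j = x 0" "pos q = q - 1" using True unfolding j_def pos_def by simp_all
      ultimately show ?thesis using fq xk by simp
    next
      case False
      have "x (q - 1) = (x N + (N - (q - 1))) mod d" using bw[OF False] q1 by blast
      moreover have "N - (q - 1) = t - 1 - q" using q unfolding N_def by simp
      moreover have "j = x N" "pos q = t - 1 - q" using False unfolding j_def pos_def by simp_all
      ultimately show ?thesis using fq xk by simp
    qed
  qed
  have posr: "pos q \<le> t - 2" if "1 \<le> q" "q < t" for q using that unfolding pos_def by auto
  have padj: "q' = Suc q \<or> q = Suc q'"
    if q: "1 \<le> q" "q < t" "1 \<le> q'" "q' < t" and w: "{f (c q), f (c q')} \<in> wheel_edges d s" for q q'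
  proof -
    have "(j + pos q') mod d = Suc ((j + pos q) mod d) mod d \<or> (j + pos q) mod d = Suc ((j + pos q') mod d) mod d"
      using adjw w fpos q by simp
    hence "(j + pos q') mod d = (j + Suc (pos q)) mod d \<or> (j + pos q) mod d = (j + Suc (pos q')) mod d"
      by (simp add: mod_Suc_eq)
    moreover have "pos q < d" "pos q' < d" "Suc (pos q) < d" "Suc (pos q') < d"
      using posr[OF q(1,2)] posr[OF q(3,4)] t d by auto
    ultimately have "pos q' = Suc (pos q) \<or> pos q = Suc (pos q')" using L1 by blast
    thus ?thesis using q unfolding pos_def by (auto split: if_splits)
  qed
  have nochord: False if "i \<in> I" "m \<noteq> 1" "m \<noteq> i" for i
  proof -
    have i3: "3 \<le> i" "i < t" using that(1) I by auto
    obtain q1 where q1: "q1 < t" "c q1 = 1" using csurj[of 1] t by auto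
    obtain q2 where q2: "q2 < t" "c q2 = i" using csurj[of i] i3 by auto
    have "q1 \<noteq> 0" using q1(2) c0 that(2) by metis
    have "q2 \<noteq> 0" using q2(2) c0 that(3) by metis
    have "{c q1, c q2} \<in> theta_edges t I" using q1 q2 that(1) unfolding theta_edges_def by auto
    hence "{f (c q1), f (c q2)} \<in> wheel_edges d s" using edge Hw by blast
    hence "q2 = Suc q1 \<or> q1 = Suc q2" using padj \<open>q1 \<noteq> 0\<close> \<open>q2 \<noteq> 0\<close> q1 q2 by simp
    thus False
    proof
      assume "q2 = Suc q1"
      hence "i = sc t 1" using q1 q2 cS by metis
      thus False using i3 t unfolding sc_def by auto
    next
      assume "q1 = Suc q2"
      hence "1 = sc t i" using q1 q2 cS by metis
      thus False using i3 unfolding sc_def by auto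
    qed
  qed
  define Z where "Z = {pos q | q. q \<in> {1..t-1} \<and> {m, c q} \<in> theta_edges t I}"
  have posS: "pos (Suc q) = (if fw then q else t - 2 - q)" for q unfolding pos_def by simp
  have HG: "H = Gw d t a j Z"
  proof
    show "H \<subseteq> Gw d t a j Z"
    proof
      fix e assume "e \<in> H"
      then obtain e' where e': "e' \<in> theta_edges t I" "e = f ` e'" using Hf by blast
      obtain y1 y2 where yy: "e' = {y1, y2}" "y1 \<in> {1..t}" "y2 \<in> {1..t}" "y1 \<noteq> y2"
        "y2 = sc t y1 \<or> (y1 = 1 \<and> y2 \<in> I)"
        using theta_edge_form[OF e'(1) I t3] by blast
      have e2: "e = {f y1, f y2}" using e' yy by simp
      have spoke: "{f m, f y} \<in> Gw d t a j Z" if yh: "y \<in> {1..t}" "y \<noteq> m" "{m, y} \<in> theta_edges t I" for y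
      proof -
        obtain q where q: "q < t" "c q = y" using csurj[OF yh(1)] by blast
        have "q \<noteq> 0" using q c0 yh(2) by metis
        hence q1: "1 \<le> q" "q < t" using q by auto
        have "pos q \<in> Z" unfolding Z_def using q1 q yh(3) by auto
        moreover have "{f m, f y} = {Inl a, Inr ((j + pos q) mod d)}" using m(2) fpos[OF q1] q by simp
        ultimately show ?thesis unfolding Gw_def by blast
      qed
      show "e \<in> Gw d t a j Z"
      proof (cases "y1 = m \<or> y2 = m")
        case True
        thus ?thesis
        proof
          assume "y1 = m" thus ?thesis using spoke[of y2] yy e' e2 by simp
        next
          assume "y2 = m"
          moreover have "{y2, y1} \<in> theta_edges t I" using yy e' by (simp add: insert_commute)
          ultimately show ?thesis using spoke[of y1] yy e2 by (simp add: insert_commute)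
        qed
      next
        case False
        have "\<not> (y1 = 1 \<and> y2 \<in> I)" using nochord False by blast
        hence ys: "y2 = sc t y1" using yy by blast
        obtain q where q: "q < t" "c q = y1" using csurj[OF yy(2)] by blast
        have "q \<noteq> 0" using q c0 False by metis
        have cq2: "c (Suc q) = y2" using cS q ys by simp
        have "Suc q \<noteq> t" using cq2 ct False by metis
        hence q1: "1 \<le> q" "q \<le> t - 2" using \<open>q \<noteq> 0\<close> q by auto
        have q2: "1 \<le> Suc q" "Suc q < t" using q1 t by auto
        have fe: "e = {Inr ((j + pos q) mod d), Inr ((j + pos (Suc q)) mod d)}"
          using e2 fpos[of q] fpos[OF q2] q1 q cq2 t by simp
        show ?thesis
        proof (cases fw)
          case True
          have "e = Ed d (j + (q - 1))" using fe True q1 unfolding Ed_def pos_def by simp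
          moreover have "q - 1 < t - 2" using q1 t by simp
          ultimately show ?thesis unfolding Gw_def by blast
        next
          case False
          have "Suc (j + (t - 2 - q)) = j + (t - 1 - q)" using q1 t by simp
          hence "e = Ed d (j + (t - 2 - q))" using fe False q1 unfolding Ed_def pos_def by (simp add: insert_commute)
          moreover have "t - 2 - q < t - 2" using q1 t by simp
          ultimately show ?thesis unfolding Gw_def by blast
        qed
      qed
    qed
  next
    show "Gw d t a j Z \<subseteq> H"
    proof
      fix e assume "e \<in> Gw d t a j Z"
      then consider (r) r where "r < t - 2" "e = Ed d (j + r)" | (s) z where "z \<in> Z" "e = {Inl a, Inr ((j + z) mod d)}"
        unfolding Gw_def by blast
      thus "e \<in> H"
      proof cases
        case (r r)
        define q where "q = (if fw then r + 1 else t - 2 - r)"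
        have q1: "1 \<le> q" "Suc q < t" using r(1) t unfolding q_def by auto
        have q2: "1 \<le> Suc q" "q < t" using q1 by auto
        have "{c q, c (Suc q)} \<in> theta_edges t I"
          using theta_mem[OF cr[of q] cr[of "Suc q"] t3] cS[of q] by simp
        hence inH: "{f (c q), f (c (Suc q))} \<in> H" by (rule edge)
        have "{f (c q), f (c (Suc q))} = {Inr ((j + pos q) mod d), Inr ((j + pos (Suc q)) mod d)}"
          using fpos[OF q1(1) q2(2)] fpos[OF q2(1) q1(2)] by simp
        also have "\<dots> = Ed d (j + r)"
        proof (cases fw)
          case True
          thus ?thesis unfolding pos_def q_def Ed_def by simp
        next
          case False
          have "t - 1 - (t - 2 - r) = Suc r" "t - 1 - Suc (t - 2 - r) = r" using r(1) t by auto
          thus ?thesis using False unfolding pos_def q_def Ed_def by (simp add: insert_commute)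
        qed
        finally show ?thesis using inH r(2) by simp
      next
        case (s z)
        then obtain q where q: "z = pos q" "q \<in> {1..t-1}" "{m, c q} \<in> theta_edges t I" unfolding Z_def by blast
        have q1: "1 \<le> q" "q < t" using q(2) t by auto
        have "{f m, f (c q)} \<in> H" using q(3) by (rule edge)
        moreover have "{f m, f (c q)} = e" using s(2) m(2) fpos[OF q1] q(1) by simp
        ultimately show ?thesis by simp
      qed
    qed
  qed
  define Zf where "Zf = {q - 1 | q. q \<in> {1..t-1} \<and> {m, c q} \<in> theta_edges t I}"
  have ZZ: "Z = (if fw then Zf else rv t Zf)"
  proof (cases fw)
    case True thus ?thesis unfolding Z_def Zf_def pos_def by simp
  next
    case False
    have "Z = (\<lambda>q. t - 1 - q) ` {q. q \<in> {1..t-1} \<and> {m, c q} \<in> theta_edges t I}"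
      unfolding Z_def pos_def using False by auto
    also have "\<dots> = (\<lambda>z. t - 2 - z) ` ((\<lambda>q. q - 1) ` {q. q \<in> {1..t-1} \<and> {m, c q} \<in> theta_edges t I})"
      unfolding image_image by (rule image_cong) auto
    also have "(\<lambda>q. q - 1) ` {q. q \<in> {1..t-1} \<and> {m, c q} \<in> theta_edges t I} = Zf"
      unfolding Zf_def by auto
    finally show ?thesis using False unfolding rv_def by simp
  qed
  have c1: "c 1 = sc t m" using cS[of 0] c0 by simp
  have memc: "{m, c q} \<in> theta_edges t I \<longleftrightarrow> (q = 1 \<or> q = t - 1 \<or> (m = 1 \<and> c q \<in> I) \<or> (c q = 1 \<and> m \<in> I))"
    if q: "1 \<le> q" "q < t" for q
  proof -
    have A: "c q = sc t m \<longleftrightarrow> q = 1" using cinj[of q 1] q c1 t by auto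
    have B: "m = sc t (c q) \<longleftrightarrow> q = t - 1"
    proof
      assume h: "m = sc t (c q)"
      hence "c (Suc q) = c 0" using cS c0 by simp
      hence "\<not> Suc q < t" using cinj[of "Suc q" 0] t by auto
      thus "q = t - 1" using q by simp
    next
      assume "q = t - 1"
      hence "Suc q = t" using t by simp
      thus "m = sc t (c q)" using cS[of q] ct by simp
    qed
    show ?thesis using theta_mem[OF m(1) cr[of q] t3] A B by simp
  qed
  have "\<forall>i\<in>I. i < t" using I by auto
  hence S1sub: "S1 t I \<subseteq> {..t-2}" unfolding S1_def by auto
  have rvrv: "rv t (rv t A) = A" if "A \<subseteq> {..t-2}" for A
  proof -
    have "rv t (rv t A) = (\<lambda>z. t - 2 - (t - 2 - z)) ` A" unfolding rv_def image_image by simp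
    also have "\<dots> = (\<lambda>z. z) ` A" by (rule image_cong) (use that in auto)
    also have "\<dots> = A" by simp
    finally show ?thesis .
  qed
  have ZfS: "Zf = S1 t I \<or> Zf = rv t (S1 t I)"
  proof (cases "m = 1")
    case True
    have cq: "c q = q + 1" if "q < t" for q using that True unfolding c_def cc_def by simp
    have "1 \<notin> I" using I by auto
    have "Zf = S1 t I"
    proof
      show "Zf \<subseteq> S1 t I"
      proof
        fix z assume "z \<in> Zf"
        then obtain q where q: "z = q - 1" "q \<in> {1..t-1}" "{m, c q} \<in> theta_edges t I" unfolding Zf_def by blast
        have q1: "1 \<le> q" "q < t" using q(2) t by auto
        hence "q = 1 \<or> q = t - 1 \<or> q + 1 \<in> I" using memc[OF q1] q(3) True cq[OF q1(2)] by simp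
        thus "z \<in> S1 t I" unfolding S1_def using q(1) by (auto simp: image_iff intro: bexI[of _ "q+1"])
      qed
    next
      show "S1 t I \<subseteq> Zf"
      proof
        fix z assume "z \<in> S1 t I"
        hence "z = 0 \<or> z = t - 2 \<or> (\<exists>i\<in>I. z = i - 2)" unfolding S1_def by auto
        then obtain q where q: "z = q - 1" "1 \<le> q" "q < t" "q = 1 \<or> q = t - 1 \<or> q + 1 \<in> I"
        proof (elim disjE)
          assume "z = 0" thus ?thesis using that[of 1] t by simp
        next
          assume "z = t - 2" thus ?thesis using that[of "t - 1"] t by simp
        next
          assume "\<exists>i\<in>I. z = i - 2"
          then obtain i where i: "i \<in> I" "z = i - 2" by blast
          have "3 \<le> i" "i < t" using i(1) I by auto
          thus ?thesis using that[of "i - 1"] i by simp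
        qed
        have "{m, c q} \<in> theta_edges t I" using memc[OF q(2,3)] q(4) True cq[OF q(3)] by auto
        thus "z \<in> Zf" unfolding Zf_def using q t by auto
      qed
    qed
    thus ?thesis by simp
  next
    case False
    have Isub: "I \<subseteq> {m}" using nochord False by blast
    have memc': "{m, c q} \<in> theta_edges t I \<longleftrightarrow> (q = 1 \<or> q = t - 1 \<or> (c q = 1 \<and> m \<in> I))"
      if "1 \<le> q" "q < t" for q using memc[OF that] False by simp
    show ?thesis
    proof (cases "m \<in> I")
      case False
      hence I0: "I = {}" using Isub by auto
      have "Zf = {0, t - 2}"
      proof -
        have "Zf = (\<lambda>q. q - 1) ` {q. q \<in> {1..t-1} \<and> (q = 1 \<or> q = t - 1)}"
          unfolding Zf_def using memc' False by auto
        also have "{q. q \<in> {1..t-1} \<and> (q = 1 \<or> q = t - 1)} = {1, t - 1}" using t by auto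
        finally show ?thesis using t by (simp add: numeral_2_eq_2)
      qed
      thus ?thesis unfolding S1_def I0 by simp
    next
      case True
      hence I1: "I = {m}" using Isub by auto
      have m3: "3 \<le> m" "m < t" using True I by auto
      have cq1: "c q = 1 \<longleftrightarrow> q = t + 1 - m" if "q < t" for q
      proof -
        have "c (t + 1 - m) = 1"
        proof -
          have "m - 1 + (t + 1 - m) = t" using m3 by simp
          thus ?thesis unfolding c_def cc_def by simp
        qed
        thus ?thesis using cinj[of q "t + 1 - m"] that m3 by auto
      qed
      have "Zf = (\<lambda>q. q - 1) ` {q. q \<in> {1..t-1} \<and> (q = 1 \<or> q = t - 1 \<or> q = t + 1 - m)}"
        unfolding Zf_def using memc' cq1 True by auto
      also have "{q. q \<in> {1..t-1} \<and> (q = 1 \<or> q = t - 1 \<or> q = t + 1 - m)} = {1, t - 1, t + 1 - m}"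
        using t m3 by auto
      finally have "Zf = {0, t - 2, t - m}" using t m3 by (simp add: numeral_2_eq_2)
      moreover have "rv t (S1 t I) = {t - 2, 0, t - m}"
      proof -
        have e: "t - Suc (Suc (m - Suc (Suc 0))) = t - m" using m3 by arith
        show ?thesis unfolding rv_def S1_def I1 using m3 by (auto simp: e numeral_2_eq_2)
      qed
      ultimately show ?thesis by auto
    qed
  qed
  have ZS: "Z = S1 t I \<or> Z = rv t (S1 t I)"
    using ZZ ZfS rvrv[OF S1sub] by auto
  show ?thesis using a jd HG ZS by blast
qed


lemma rv_mono: "A \<subseteq> B \<Longrightarrow> rv t A \<subseteq> rv t B" unfolding rv_def by auto

lemma rv_full: "rv t {..<t-1} = {..<t-1}"
proof -
  have "rv t {..<t-1} \<subseteq> {..<t-1}" unfolding rv_def by auto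
  moreover have "{..<t-1} \<subseteq> rv t {..<t-1}"
  proof
    fix z assume z: "z \<in> {..<t-1}"
    hence "z = t - 2 - (t - 2 - z)" "t - 2 - z \<in> {..<t-1}" by auto
    thus "z \<in> rv t {..<t-1}" unfolding rv_def by blast
  qed
  ultimately show ?thesis by blast
qed

lemma rvrv': "A \<subseteq> {..<t-1} \<Longrightarrow> rv t (rv t A) = A"
proof -
  assume h: "A \<subseteq> {..<t-1}"
  have "rv t (rv t A) = (\<lambda>z. t - 2 - (t - 2 - z)) ` A" unfolding rv_def image_image by simp
  also have "\<dots> = (\<lambda>z. z) ` A" by (rule image_cong) (use h in auto)
  also have "\<dots> = A" by simp
  finally show ?thesis .
qed

lemma S1_props:
  assumes "I \<subseteq> {3..<t}" "t \<ge> 4"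
  shows "S1 t I \<subseteq> {..<t-1}" "0 \<in> S1 t I" "t - 2 \<in> S1 t I"
    "rv t (S1 t I) \<subseteq> {..<t-1}" "0 \<in> rv t (S1 t I)" "t - 2 \<in> rv t (S1 t I)"
proof -
  have "\<forall>i\<in>I. i < t" using assms by auto
  thus s: "S1 t I \<subseteq> {..<t-1}" unfolding S1_def using assms(2) by auto
  show "0 \<in> S1 t I" "t - 2 \<in> S1 t I" unfolding S1_def by auto
  show "rv t (S1 t I) \<subseteq> {..<t-1}" unfolding rv_def using assms(2) by auto
  have "t - 2 - (t - 2) = 0" "t - 2 - 0 = t - 2" by auto
  thus "0 \<in> rv t (S1 t I)" "t - 2 \<in> rv t (S1 t I)" unfolding rv_def S1_def by (metis UnI1 image_eqI insertI1 insertI2 singletonI)+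
qed

lemma fan_iff:
  assumes I: "I \<subseteq> {3..<t}" and t: "t \<ge> 4"
  shows "S1 t I = {..<t-1} \<longleftrightarrow> I = fan_chords t"
proof
  assume h: "S1 t I = {..<t-1}"
  show "I = fan_chords t" unfolding fan_chords_def
  proof
    show "I \<subseteq> {3..<t}" by (rule I)
    show "{3..<t} \<subseteq> I"
    proof
      fix i assume i: "i \<in> {3..<t}"
      hence "i - 2 \<in> {..<t-1}" by auto
      hence "i - 2 \<in> S1 t I" using h by simp
      moreover have "i - 2 \<noteq> 0" "i - 2 \<noteq> t - 2" using i by auto
      ultimately have "i - 2 \<in> (\<lambda>i. i - 2) ` I" unfolding S1_def by blast
      then obtain i' where "i' \<in> I" "i - 2 = i' - 2" by (rule imageE) simp
      moreover have "i' \<ge> 3" using \<open>i' \<in> I\<close> I by auto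
      moreover have "3 \<le> i" using i by simp
      ultimately have "i = i'" by linarith
      thus "i \<in> I" using \<open>i' \<in> I\<close> by simp
    qed
  qed
next
  assume h: "I = fan_chords t"
  show "S1 t I = {..<t-1}"
  proof
    show "S1 t I \<subseteq> {..<t-1}" using S1_props[OF I t] by simp
    show "{..<t-1} \<subseteq> S1 t I"
    proof
      fix z assume z: "z \<in> {..<t-1}"
      show "z \<in> S1 t I"
      proof (cases "z = 0 \<or> z = t - 2")
        case True thus ?thesis unfolding S1_def by auto
      next
        case False
        hence "z + 2 \<in> I" using z t unfolding h fan_chords_def by auto
        thus ?thesis unfolding S1_def by (intro UnI2 image_eqI[of _ _ "z + 2"]) simp_all
      qed
    qed
  qed
qed

lemma sym_closed:
  assumes I: "I \<subseteq> {3..<t}" and sym: "theta_symmetric t I" and i: "i \<in> I"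
  shows "t + 2 - i \<in> I"
proof -
  have fin: "finite I" using I finite_subset by blast
  define xs where "xs = sorted_list_of_set I"
  define l where "l = length xs"
  have setxs: "set xs = I" unfolding xs_def using fin by simp
  obtain k where k: "k < l" "xs ! k = i" using i setxs unfolding l_def by (metis in_set_conv_nth)
  have "l \<noteq> 0" using k by simp
  hence S: "\<forall>j. 1 \<le> j \<and> 2 * j \<le> l + 1 \<longrightarrow> xs ! (j - 1) + xs ! (l - j) = t + 2"
    using sym unfolding theta_symmetric_def Let_def xs_def[symmetric] l_def[symmetric] by simp
  have "xs ! k + xs ! (l - Suc k) = t + 2"
  proof (cases "2 * (k + 1) \<le> l + 1")
    case True
    thus ?thesis using S[rule_format, of "k + 1"] by simp
  next
    case False
    hence "1 \<le> l - k" "2 * (l - k) \<le> l + 1" using k by auto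
    hence "xs ! (l - k - 1) + xs ! (l - (l - k)) = t + 2" using S by blast
    moreover have "l - (l - k) = k" "l - k - 1 = l - Suc k" using k by auto
    ultimately show ?thesis by simp
  qed
  moreover have "xs ! (l - Suc k) \<in> I" using setxs k unfolding l_def by (metis diff_Suc_less less_nat_zero_code not_gr_zero nth_mem)
  ultimately show ?thesis using k by (metis add_diff_cancel_left')
qed

lemma sym_rv:
  assumes I: "I \<subseteq> {3..<t}" and t: "t \<ge> 4" and sym: "theta_symmetric t I"
  shows "rv t (S1 t I) = S1 t I"
proof -
  have sub: "rv t (S1 t I) \<subseteq> S1 t I"
  proof
    fix w assume "w \<in> rv t (S1 t I)"
    then obtain z where z: "z \<in> S1 t I" "w = t - 2 - z" unfolding rv_def by blast
    hence "z = 0 \<or> z = t - 2 \<or> (\<exists>i\<in>I. z = i - 2)" unfolding S1_def by auto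
    thus "w \<in> S1 t I"
    proof (elim disjE)
      assume "z = 0" thus ?thesis using z unfolding S1_def by simp
    next
      assume "z = t - 2" thus ?thesis using z unfolding S1_def by simp
    next
      assume "\<exists>i\<in>I. z = i - 2"
      then obtain i where i: "i \<in> I" "z = i - 2" by blast
      have "t + 2 - i \<in> I" by (rule sym_closed[OF I sym i(1)])
      moreover have "3 \<le> i" "i < t" using i I by auto
      moreover have "w = (t + 2 - i) - 2" using z i \<open>3 \<le> i\<close> by simp
      ultimately show ?thesis unfolding S1_def by (intro UnI2 image_eqI[of _ _ "t + 2 - i"]) simp_all
    qed
  qed
  have "S1 t I = rv t (rv t (S1 t I))" using rvrv'[OF S1_props(1)[OF I t]] by simp
  also have "\<dots> \<subseteq> rv t (S1 t I)" by (rule rv_mono[OF sub])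
  finally show ?thesis using sub by blast
qed


theorem lemma2p1:
  fixes d s t l :: nat and I :: "nat set" and e1 e2 :: "(nat + nat) set"
  assumes "s \<ge> 1" and "d \<ge> 2 * t - 3" and "t \<ge> 4" and "t \<ge> l + 3"
    and "theta_chord_set t l I"
    and "e1 \<in> wheel_edges d s" and "e2 \<in> wheel_edges d s" and "e1 \<noteq> e2"
  shows "card {H. H \<subseteq> wheel_edges d s \<and> iso_theta t I H \<and> e1 \<in> H \<and> e2 \<in> H
                \<and> card (\<Union>H \<inter> hubs s) = 1}
         \<le> (if I = fan_chords t then max (s * (t - 3)) (t - 2)
            else if theta_symmetric t I then s * (t - 3)
            else 2 * s * (t - 3))"
proof -
  note s = assms(1) and d = assms(2) and t = assms(3) and e1 = assms(6) and e2 = assms(7) and ne = assms(8)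
  have I: "I \<subseteq> {3..<t}" using assms(5) unfolding theta_chord_set_def by blast
  let ?P = "{H. H \<subseteq> wheel_edges d s \<and> iso_theta t I H \<and> e1 \<in> H \<and> e2 \<in> H \<and> card (\<Union>H \<inter> hubs s) = 1}"
  define A where "A = S1 t I"
  define B where "B = rv t (S1 t I)"
  define T where "T Z = {(a,j). a<s \<and> j<d \<and> e1 \<in> Gw d t a j Z \<and> e2 \<in> Gw d t a j Z}" for Z
  have finT: "finite (T Z)" for Z
    by (rule finite_subset[of _ "{..<s} \<times> {..<d}"]) (auto simp: T_def)
  have PA: "?P \<subseteq> (\<lambda>(a,j). Gw d t a j A) ` T A \<union> (\<lambda>(a,j). Gw d t a j B) ` T B"
  proof
    fix H assume H: "H \<in> ?P"
    then obtain a j Z where aj: "a < s" "j < d" "Z = A \<or> Z = B" "H = Gw d t a j Z"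
      using char[OF t d I, of H s] unfolding A_def B_def by blast
    have "e1 \<in> Gw d t a j Z" "e2 \<in> Gw d t a j Z" using H aj(4) by auto
    hence "(a, j) \<in> T Z" using aj unfolding T_def by simp
    thus "H \<in> (\<lambda>(a,j). Gw d t a j A) ` T A \<union> (\<lambda>(a,j). Gw d t a j B) ` T B"
      using aj(3,4) by (auto intro: image_eqI[of _ _ "(a,j)"])
  qed
  have c2: "card ?P \<le> card (T A) + card (T B)"
  proof -
    have "card ?P \<le> card ((\<lambda>(a,j). Gw d t a j A) ` T A \<union> (\<lambda>(a,j). Gw d t a j B) ` T B)"
      by (rule card_mono[OF _ PA]) (simp add: finT)
    also have "\<dots> \<le> card ((\<lambda>(a,j). Gw d t a j A) ` T A) + card ((\<lambda>(a,j). Gw d t a j B) ` T B)"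
      by (rule card_Un_le)
    also have "\<dots> \<le> card (T A) + card (T B)"
      by (intro add_mono card_image_le finT)
    finally show ?thesis .
  qed
  have c1: "card ?P \<le> card (T A)" if "B = A"
  proof -
    have "?P \<subseteq> (\<lambda>(a,j). Gw d t a j A) ` T A" using PA that by simp
    hence "card ?P \<le> card ((\<lambda>(a,j). Gw d t a j A) ` T A)" by (rule card_mono[OF finite_imageI[OF finT]])
    also have "\<dots> \<le> card (T A)" by (rule card_image_le[OF finT])
    finally show ?thesis .
  qed
  have props: "A \<subseteq> {..<t-1}" "0 \<in> A" "t - 2 \<in> A" "B \<subseteq> {..<t-1}" "0 \<in> B" "t - 2 \<in> B"
    using S1_props[OF I t] unfolding A_def B_def by auto
  have TA: "card (T A) \<le> (if A = {..<t-1} then max (s*(t-3)) (t-2) else s*(t-3))"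
    unfolding T_def by (rule count_T[OF d t s props(1-3) e1 e2 ne])
  have TB: "card (T B) \<le> (if B = {..<t-1} then max (s*(t-3)) (t-2) else s*(t-3))"
    unfolding T_def by (rule count_T[OF d t s props(4-6) e1 e2 ne])
  have Afull: "A = {..<t-1} \<longleftrightarrow> I = fan_chords t" unfolding A_def by (rule fan_iff[OF I t])
  have Bfull: "B = {..<t-1} \<longleftrightarrow> A = {..<t-1}"
  proof
    assume "B = {..<t-1}"
    hence "rv t B = {..<t-1}" using rv_full by simp
    moreover have "rv t B = A" unfolding A_def B_def by (rule rvrv'[OF S1_props(1)[OF I t]])
    ultimately show "A = {..<t-1}" by simp
  next
    assume "A = {..<t-1}"
    thus "B = {..<t-1}" unfolding B_def A_def[symmetric] using rv_full by simp
  qed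
  show ?thesis
  proof (cases "I = fan_chords t")
    case True
    hence Af: "A = {..<t-1}" using Afull by simp
    hence "B = A" using Bfull by simp
    hence "card ?P \<le> card (T A)" by (rule c1)
    thus ?thesis using TA Af True by simp
  next
    case False
    hence Anf: "A \<noteq> {..<t-1}" using Afull by simp
    hence Bnf: "B \<noteq> {..<t-1}" using Bfull by simp
    show ?thesis
    proof (cases "theta_symmetric t I")
      case True
      have "B = A" unfolding A_def B_def by (rule sym_rv[OF I t True])
      hence "card ?P \<le> card (T A)" by (rule c1)
      thus ?thesis using TA Anf False True by simp
    next
      case nsym: False
      have "card ?P \<le> s*(t-3) + s*(t-3)" using c2 TA TB Anf Bnf by simp
      thus ?thesis using False nsym by simp
    qed
  qed
qed


end
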